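(* In the FHMA network described below with a fixed integer number of sub-bands $N\ge 2$, consider the normalized mean local delay $\frac{D(N)}{\log_2(1+\theta)}$ as a function of the SINR threshold $\theta>0$, and let $\theta_{\mathrm{opt}}$ denote its minimizer. (i) In the noise-limited regime (interference neglected, i.e. $D(N)=N\exp\left(\frac{\theta r_0^\alpha WN_0}{N}\right)$), $$\theta_{\mathrm{opt}}=\exp\left(\mathcal{W}\left(\frac{N}{r_0^{\alpha}WN_0}\right)\right)-1,$$ where $\mathcal{W}$ is the Lambert $\mathcal{W}$ function, i.e. $\mathcal{W}(z)e^{\mathcal{W}(z)}=z$. (ii) In the interference-limited regime (noise neglected, $N_0=0$), $$\theta_{\mathrm{opt}}\in\left(b_0^{-1/(\delta+1)}-1,\ b_0^{-1/\delta}\right),\qquad b_0=\lambda c_d r_0^d\delta C(\delta)(N-1)^{\delta-1}N^{-\delta}.$$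
   Context: Model: transmitters form a homogeneous Poisson point process $\Phi$ of intensity $\lambda>0$ in $\mathbb{R}^d$; the typical receiver is at the origin and its desired transmitter $x_0\in\Phi$ is at distance $r_0>0$; probabilities are under the Palm distribution at $x_0$. Time is slotted. Path loss $\kappa r^{-\alpha}$ with $\alpha>d$, $\delta=d/\alpha\in(0,1)$. Power fading coefficients are i.i.d. exponential with mean $1$ over transmitters and slots, independent of everything. Unit power, always backlogged transmitters. Bandwidth $W$, noise power spectral density $N_r$, $N_0=N_r/\kappa$, SINR threshold $\theta>0$. $c_d$ is the volume of the unit ball in $\mathbb{R}^d$, $C(\delta)=\Gamma(1+\delta)\Gamma(1-\delta)=\frac{\pi\delta}{\sin(\pi\delta)}$. FHMA with $N$ sub-bands: each transmitter $x$ independently picks a sub-band $\mathcal{S}_k(x)$ uniformly from $\{1,\dots,N\}$ in each slot $k$; $\mathrm{SINR}_k=\frac{h_{k,x_0}r_0^{-\alpha}}{WN_0/N+\sum_{x\in\Phi\setminus\{x_0\}}h_{k,x}|x|^{-\alpha}\mathbf{1}(\mathcal{S}_k(x)=\mathcal{S}_k(x_0))}$; a slot is successful if $\mathrm{SINR}_k>\theta$; the local delay is the number of slots until the $N$-th successful slot and $D(N)$ (depending on $\theta$) is its mean, which equals $N\exp\left(\frac{\lambda c_d r_0^d\theta^{\delta}C(\delta)}{(N-1)^{1-\delta}N^{\delta}}+\frac{\theta r_0^\alpha WN_0}{N}\right)$. The normalization by $\log_2(1+\theta)$ accounts for slot duration proportional to $1/\log_2(1+\theta)$. *)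

theory Defs
  imports "HOL-Analysis.Analysis"
begin

text \<open>Principal branch of the Lambert W function on [-1/e, inf):
  the unique w >= -1 with w * exp w = z.\<close>
definition lambertW :: "real \<Rightarrow> real" where
  "lambertW z = (THE w. w \<ge> -1 \<and> w * exp w = z)"

definition Cdelta :: "real \<Rightarrow> real" where
  "Cdelta \<delta> = Gamma (1 + \<delta>) * Gamma (1 - \<delta>)"

text \<open>Parameters: lam (intensity), d (dimension), alpha (path loss exponent),
  r0 (link distance), W (bandwidth), N0 (noise N_r / kappa).
  c_d = unit_ball_vol d, delta = d / alpha.\<close>
definition fhma_delay ::
  "real \<Rightarrow> nat \<Rightarrow> real \<Rightarrow> real \<Rightarrow> real \<Rightarrow> real \<Rightarrow> nat \<Rightarrow> real \<Rightarrow> real" where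
  "fhma_delay lam d \<alpha> r0 W N0 N \<theta> =
     (let \<delta> = real d / \<alpha> in
      real N * exp (lam * unit_ball_vol (real d) * r0 powr (real d) * \<theta> powr \<delta> * Cdelta \<delta>
                     / ((real N - 1) powr (1 - \<delta>) * real N powr \<delta>)
                   + \<theta> * r0 powr \<alpha> * W * N0 / real N))"

definition fhma_delay_noise :: "real \<Rightarrow> real \<Rightarrow> real \<Rightarrow> real \<Rightarrow> nat \<Rightarrow> real \<Rightarrow> real" where
  "fhma_delay_noise \<alpha> r0 W N0 N \<theta> = real N * exp (\<theta> * r0 powr \<alpha> * W * N0 / real N)"

definition normalized :: "(real \<Rightarrow> real) \<Rightarrow> real \<Rightarrow> real" where
  "normalized D \<theta> = D \<theta> / log 2 (1 + \<theta>)"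

definition minimizers :: "(real \<Rightarrow> real) \<Rightarrow> real set" where
  "minimizers f = {\<theta>. \<theta> > 0 \<and> (\<forall>t>0. f \<theta> \<le> f t)}"

end

theory Submission imports Defs begin

lemma unique_min_deriv:
  fixes G G' :: "real \<Rightarrow> real"
  assumes t0: "t0 > 0"
    and der: "\<And>x. x > 0 \<Longrightarrow> (G has_real_derivative G' x) (at x)"
    and neg: "\<And>x. 0 < x \<Longrightarrow> x < t0 \<Longrightarrow> G' x < 0"
    and pos: "\<And>x. t0 < x \<Longrightarrow> G' x > 0"
    and x: "x > 0" "x \<noteq> t0"
  shows "G t0 < G x"
proof -
  have cont: "continuous_on {a..b} G" if "a > 0" for a b
    by (rule DERIV_continuous_on[of _ _ G']) (use der that in \<open>auto intro: has_field_derivative_at_within\<close>)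
  have cont': "continuous_on {a..b} (\<lambda>y. - G y)" if "a > 0" for a b
    using cont[OF that] by (intro continuous_intros)
  show ?thesis
  proof (cases "x < t0")
    case True
    define H where "H = (\<lambda>y. - G y)"
    have "H x < H t0"
    proof (rule DERIV_pos_imp_increasing_open[of x t0 H])
      show "x < t0" by fact
      fix y assume "x < y" "y < t0"
      then have "y > 0" using x by linarith
      then show "\<exists>z. (H has_real_derivative z) (at y) \<and> z > 0" unfolding H_def
        using der[OF \<open>y>0\<close>] neg[of y] \<open>y < t0\<close>
        by (intro exI[of _ "- G' y"]) (auto intro!: derivative_eq_intros)
    qed (unfold H_def, rule cont'[OF x(1)])
    then show ?thesis by (simp add: H_def)
  next
    case False
    then have "t0 < x" using x by linarith
    show "G t0 < G x"
    proof (rule DERIV_pos_imp_increasing_open[of t0 x G])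
      show "t0 < x" by fact
      fix y assume "t0 < y" "y < x"
      then show "\<exists>z. (G has_real_derivative z) (at y) \<and> z > 0"
        using der[of y] pos[of y] t0 by auto
    qed (rule cont[OF t0])
  qed
qed

lemma minimizers_single:
  fixes F G G' :: "real \<Rightarrow> real"
  assumes c: "c > 0" and FG: "\<And>x. x > 0 \<Longrightarrow> F x = c * exp (G x)"
    and t0: "t0 > 0"
    and der: "\<And>x. x > 0 \<Longrightarrow> (G has_real_derivative G' x) (at x)"
    and neg: "\<And>x. 0 < x \<Longrightarrow> x < t0 \<Longrightarrow> G' x < 0"
    and pos: "\<And>x. t0 < x \<Longrightarrow> G' x > 0"
  shows "minimizers F = {t0}"
proof -
  have lt: "F t0 < F x" if "x > 0" "x \<noteq> t0" for x
    using unique_min_deriv[OF t0 der neg pos that] FG[OF that(1)] FG[OF t0] c by simp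
  have le: "F t0 \<le> F x" if "x > 0" for x
    using lt[OF that] by (cases "x = t0") auto
  show ?thesis unfolding minimizers_def
  proof (safe)
    fix x assume "x > 0" "\<forall>t>0. F x \<le> F t"
    then show "x = t0" using lt[of x] t0 by force
  qed (use t0 le in auto)
qed

lemma lambertW_eq:
  assumes "z > 0" "u \<ge> -1" "u * exp u = z"
  shows "lambertW z = u"
  unfolding lambertW_def
proof (rule the_equality)
  show "u \<ge> -1 \<and> u * exp u = z" using assms by simp
  have upos: "u > 0" using assms by (metis exp_gt_zero zero_less_mult_pos2)
  fix w assume w: "w \<ge> -1 \<and> w * exp w = z"
  then have wpos: "w > 0" using assms by (metis exp_gt_zero zero_less_mult_pos2)
  show "w = u"
  proof (rule ccontr)
    assume "w \<noteq> u"
    then consider "w < u" | "u < w" by linarith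
    then show False
    proof cases
      case 1
      then have "w * exp w < u * exp u" using wpos by (intro mult_strict_mono) auto
      then show False using w assms by simp
    next
      case 2
      then have "u * exp u < w * exp w" using upos by (intro mult_strict_mono) auto
      then show False using w assms by simp
    qed
  qed
qed

lemma lambertW_exists:
  assumes "z > (0::real)"
  shows "\<exists>u>0. u * exp u = z"
proof -
  have "\<exists>u. 0 \<le> u \<and> u \<le> z \<and> u * exp u = z"
    using assms by (intro IVT) (auto intro!: continuous_intros)
  then obtain u where "0 \<le> u" "u * exp u = z" by blast
  then show ?thesis using assms by (intro exI[of _ u]) (auto simp: order.order_iff_strict)
qed


lemma k_gt: assumes "(x::real) > 0" shows "x < (1+x) * ln (1+x)"
proof -
  define f where "f = (\<lambda>y::real. (1+y) * ln (1+y) - y)"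
  have "f 0 < f x"
  proof (rule DERIV_pos_imp_increasing_open[of 0 x f])
    show "0 < x" by fact
    fix y :: real assume y: "0 < y" "y < x"
    show "\<exists>z. (f has_real_derivative z) (at y) \<and> z > 0" unfolding f_def
      using y by (intro exI[of _ "ln (1+y)"]) (auto intro!: derivative_eq_intros simp: field_simps)
  next
    show "continuous_on {0..x} f" unfolding f_def
      by (intro continuous_intros) auto
  qed
  then show ?thesis by (simp add: f_def)
qed

lemma k_mono: assumes "(0::real) < x" "x < y" shows "(1+x) * ln (1+x) < (1+y) * ln (1+y)"
  using assms by (intro mult_strict_mono) auto

lemma q_mono: assumes "(0::real) < x" "x < y"
  shows "(1+x) * ln (1+x) / x < (1+y) * ln (1+y) / y"
proof (rule DERIV_pos_imp_increasing[of x y "\<lambda>t. (1+t) * ln (1+t) / t"])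
  show "x < y" by fact
  fix t :: real assume t: "x \<le> t" "t \<le> y"
  then have tp: "t > 0" using assms by linarith
  have "ln (1+t) < t" using ln_add_one_self_less_self[OF tp] .
  then have pos: "(t - ln (1+t)) / t^2 > 0" using tp by simp
  have "((\<lambda>t. (1+t) * ln (1+t) / t) has_real_derivative (t - ln (1+t)) / t^2) (at t)"
    using tp apply (auto intro!: derivative_eq_intros simp: field_simps power2_eq_square)
    apply (subgoal_tac "t * t + t * (t * t) = t*t*(1+t)")
     apply (subgoal_tac "t * (t * t) + t * (t * (t * t)) - (t * (t * ln (1 + t)) + t * (t * (t * ln (1 + t)))) = t*t*(1+t) * (t - ln (1+t))")
      apply simp
     apply (simp add: algebra_simps)
    apply (simp add: algebra_simps)
    done
  then show "\<exists>z. ((\<lambda>t. (1+t) * ln (1+t) / t) has_real_derivative z) (at t) \<and> z > 0"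
    using pos by blast
qed


lemma part1:
  fixes r0 \<alpha> W N0 :: real and N :: nat
  assumes "r0 > 0" "W > 0" "N0 > 0" "N \<ge> 2"
  shows "minimizers (normalized (fhma_delay_noise \<alpha> r0 W N0 N))
           = {exp (lambertW (real N / (r0 powr \<alpha> * W * N0))) - 1}"
proof -
  define z where "z = real N / (r0 powr \<alpha> * W * N0)"
  define a where "a = r0 powr \<alpha> * W * N0 / real N"
  have ap: "a > 0" and zp: "z > 0" using assms by (auto simp: a_def z_def)
  have za: "z = 1 / a" by (simp add: a_def z_def)
  obtain u where up: "u > 0" and uz: "u * exp u = z" using lambertW_exists[OF zp] by blast
  have W: "lambertW z = u" using lambertW_eq[OF zp _ uz] up by simp
  define t0 where "t0 = exp u - 1"
  have t0p: "t0 > 0" using up by (simp add: t0_def)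
  have kt0: "(1+t0) * ln (1+t0) = 1 / a" using uz za by (simp add: t0_def mult.commute)
  have "minimizers (normalized (fhma_delay_noise \<alpha> r0 W N0 N)) = {t0}"
  proof (rule minimizers_single[where c = "real N * ln 2"
        and G = "\<lambda>x. a * x - ln (ln (1 + x))" and G' = "\<lambda>x. a - 1 / ((1+x) * ln (1+x))"])
    show "real N * ln 2 > 0" using assms by simp
    show "t0 > 0" by fact
    fix x :: real assume xp: "x > 0"
    show "normalized (fhma_delay_noise \<alpha> r0 W N0 N) x = real N * ln 2 * exp (a * x - ln (ln (1 + x)))"
      using xp by (simp add: normalized_def fhma_delay_noise_def a_def log_def exp_diff mult.commute)
    show "((\<lambda>x. a * x - ln (ln (1 + x))) has_real_derivative a - 1 / ((1+x) * ln (1+x))) (at x)"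
      using xp by (auto intro!: derivative_eq_intros simp: field_simps)
  next
    fix x :: real assume "0 < x" "x < t0"
    then have "(1+x) * ln (1+x) < 1 / a" using k_mono kt0 by metis
    moreover have "(1+x) * ln (1+x) > 0" using \<open>0 < x\<close> by simp
    ultimately show "a - 1 / ((1+x) * ln (1+x)) < 0" using ap by (simp add: field_simps)
  next
    fix x :: real assume "t0 < x"
    then have "(1+x) * ln (1+x) > 1 / a" using k_mono kt0 t0p by metis
    moreover have "(1+x) * ln (1+x) > 0" using \<open>t0 < x\<close> t0p by simp
    ultimately show "a - 1 / ((1+x) * ln (1+x)) > 0" using ap by (simp add: field_simps)
  qed
  then show ?thesis by (simp add: W z_def[symmetric] t0_def)
qed


lemma part2:
  fixes lam r0 \<alpha> :: real and d N :: nat and W :: real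
  assumes "lam > 0" and "r0 > 0" and "d \<ge> 1" and "\<alpha> > real d" and "N \<ge> 2"
  defines "\<delta> \<equiv> real d / \<alpha>"
  defines "b0 \<equiv> lam * unit_ball_vol (real d) * r0 powr (real d) * \<delta> * Cdelta \<delta>
                  * (real N - 1) powr (\<delta> - 1) * real N powr (- \<delta>)"
  shows "\<exists>\<theta>opt. minimizers (normalized (fhma_delay lam d \<alpha> r0 W 0 N)) = {\<theta>opt}
              \<and> b0 powr (- 1 / (\<delta> + 1)) - 1 < \<theta>opt \<and> \<theta>opt < b0 powr (- 1 / \<delta>)"
proof -
  have \<alpha>p: "\<alpha> > 0" using assms by linarith
  have \<delta>p: "\<delta> > 0" and \<delta>1: "\<delta> < 1" using assms \<alpha>p by (auto simp: \<delta>_def field_simps)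
  have Cp: "Cdelta \<delta> > 0" using \<delta>p \<delta>1 by (simp add: Cdelta_def)
  have N1: "real N - 1 > 0" using assms by simp
  define A where "A = lam * unit_ball_vol (real d) * r0 powr (real d) * Cdelta \<delta>
                     / ((real N - 1) powr (1 - \<delta>) * real N powr \<delta>)"
  have Ap: "A > 0" using assms Cp N1 by (simp add: A_def)
  have b0A: "b0 = \<delta> * A"
  proof -
    have "(real N - 1) powr (\<delta> - 1) = 1 / (real N - 1) powr (1 - \<delta>)"
      using N1 by (simp add: powr_minus_divide[symmetric] powr_minus[symmetric])
    moreover have "real N powr (- \<delta>) = 1 / real N powr \<delta>" by (simp add: powr_minus divide_inverse)
    ultimately show ?thesis by (simp add: b0_def A_def)
  qed
  have b0p: "b0 > 0" using b0A Ap \<delta>p by simp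
  define q where "q = (\<lambda>x::real. (1+x) * ln (1+x) / x)"
  define h where "h = (\<lambda>x::real. x powr \<delta> * q x)"
  have hx: "h x = x powr (\<delta> - 1) * ((1+x) * ln (1+x))" if "x > 0" for x
    using that by (simp add: h_def q_def powr_diff)
  have qlt: "q x < 1 + x" if "x > 0" for x
  proof -
    have "(1+x) * ln (1+x) < (1+x) * x"
      using ln_add_one_self_less_self[OF that] that by (intro mult_strict_left_mono) auto
    then show ?thesis using that by (simp add: q_def divide_less_eq)
  qed
  have qp: "q x > 1" if "x > 0" for x
    using k_gt[OF that] that by (simp add: q_def)
  have hmono: "h x < h y" if "0 < x" "x < y" for x y
  proof -
    have "x powr \<delta> < y powr \<delta>" using that \<delta>p by (simp add: powr_less_mono2)
    moreover have "q x < q y" using q_mono[OF that] by (simp add: q_def)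
    ultimately show ?thesis unfolding h_def using qp[of x] that by (intro mult_strict_mono) auto
  qed
  define U where "U = b0 powr (- 1 / \<delta>)"
  have Up: "U > 0" using b0p by (simp add: U_def)
  have UU: "U powr \<delta> = 1 / b0"
  proof -
    have "U powr \<delta> = b0 powr ((- 1 / \<delta>) * \<delta>)" by (simp only: U_def powr_powr)
    also have "(- 1 / \<delta>) * \<delta> = - 1" using \<delta>p by simp
    finally show ?thesis using b0p by (simp add: powr_minus_divide)
  qed
  have hU: "h U > 1 / b0"
    using qp[OF Up] UU b0p by (simp add: h_def divide_strict_right_mono)
  define L where "L = min 1 ((1 / (2*b0)) powr (1/\<delta>))"
  have Lp: "L > 0" using b0p by (simp add: L_def)
  have "L powr \<delta> \<le> ((1 / (2*b0)) powr (1/\<delta>)) powr \<delta>"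
    using Lp \<delta>p by (intro powr_mono2) (auto simp: L_def)
  also have "\<dots> = 1 / (2*b0)" using \<delta>p b0p by (simp add: powr_powr)
  finally have LL: "L powr \<delta> \<le> 1 / (2*b0)" .
  have "q L < 1 + L"
    using qlt[OF Lp] .
  also have "\<dots> \<le> 2" by (simp add: L_def)
  finally have "h L < 2 * L powr \<delta>" using Lp by (simp add: h_def)
  also have "\<dots> \<le> 1 / b0" using LL b0p by (simp add: field_simps)
  finally have hL: "h L < 1 / b0" .
  have LU: "L \<le> U"
  proof (rule ccontr)
    assume "\<not> L \<le> U"
    then have "h U < h L" using hmono Up by simp
    then show False using hL hU by simp
  qed
  have "\<exists>x. L \<le> x \<and> x \<le> U \<and> h x = 1 / b0"
  proof (rule IVT)
    show "\<forall>x. L \<le> x \<and> x \<le> U \<longrightarrow> isCont h x"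
      using Lp unfolding h_def q_def by (auto intro!: continuous_intros)
  qed (use hL hU LU in auto)
  then obtain t0 where t0L: "L \<le> t0" and ht0: "h t0 = 1 / b0" by blast
  have t0p: "t0 > 0" using t0L Lp by simp
  have t0U: "t0 < U"
  proof (rule ccontr)
    assume "\<not> t0 < U"
    then have "h U \<le> h t0" using hmono[of U t0] Up by (cases "U = t0") auto
    then show False using hU ht0 by simp
  qed
  have low: "b0 powr (- 1 / (\<delta> + 1)) - 1 < t0"
  proof (rule ccontr)
    assume "\<not> ?thesis"
    then have s: "1 + t0 \<le> b0 powr (- 1 / (\<delta> + 1))" by simp
    have "1 / b0 = t0 powr \<delta> * q t0" using ht0 by (simp add: h_def)
    also have "\<dots> < t0 powr \<delta> * (1 + t0)"
      using qlt[OF t0p] t0p by (intro mult_strict_left_mono) auto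
    also have "\<dots> < (1 + t0) powr \<delta> * (1 + t0)"
      using t0p \<delta>p by (intro mult_strict_right_mono powr_less_mono2) auto
    also have "\<dots> = (1 + t0) powr (\<delta> + 1)" using t0p by (simp add: powr_add)
    also have "\<dots> \<le> (b0 powr (- 1 / (\<delta> + 1))) powr (\<delta> + 1)"
      using s t0p \<delta>p by (intro powr_mono2) auto
    also have "\<dots> = b0 powr ((- 1 / (\<delta> + 1)) * (\<delta> + 1))" by (simp only: powr_powr)
    also have "(- 1 / (\<delta> + 1)) * (\<delta> + 1) = - 1" using \<delta>p by simp
    also have "b0 powr - 1 = 1 / b0" using b0p by (simp add: powr_minus_divide)
    finally show False by simp
  qed
  have "minimizers (normalized (fhma_delay lam d \<alpha> r0 W 0 N)) = {t0}"
  proof (rule minimizers_single[where c = "real N * ln 2"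
        and G = "\<lambda>x. A * x powr \<delta> - ln (ln (1 + x))"
        and G' = "\<lambda>x. b0 * x powr (\<delta> - 1) - 1 / ((1+x) * ln (1+x))"])
    show "real N * ln 2 > 0" using assms by simp
    show "t0 > 0" by fact
    fix x :: real assume xp: "x > 0"
    show "normalized (fhma_delay lam d \<alpha> r0 W 0 N) x = real N * ln 2 * exp (A * x powr \<delta> - ln (ln (1 + x)))"
      using xp by (simp add: normalized_def fhma_delay_def A_def \<delta>_def[symmetric] log_def exp_diff
          mult.commute mult.left_commute)
    show "((\<lambda>x. A * x powr \<delta> - ln (ln (1 + x))) has_real_derivative
            b0 * x powr (\<delta> - 1) - 1 / ((1+x) * ln (1+x))) (at x)"
      using xp by (auto intro!: derivative_eq_intros simp: field_simps b0A powr_diff)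
  next
    fix x :: real assume x: "0 < x" "x < t0"
    then have "h x < 1 / b0" using hmono ht0 by metis
    then have "x powr (\<delta> - 1) * ((1+x) * ln (1+x)) < 1 / b0" using hx x by simp
    moreover have "(1+x) * ln (1+x) > 0" using x by simp
    ultimately show "b0 * x powr (\<delta> - 1) - 1 / ((1+x) * ln (1+x)) < 0" using b0p
      by (simp add: field_simps)
  next
    fix x :: real assume x: "t0 < x"
    then have "h x > 1 / b0" using hmono ht0 t0p by metis
    then have "x powr (\<delta> - 1) * ((1+x) * ln (1+x)) > 1 / b0" using hx x t0p by simp
    moreover have "(1+x) * ln (1+x) > 0" using x t0p by simp
    ultimately show "b0 * x powr (\<delta> - 1) - 1 / ((1+x) * ln (1+x)) > 0" using b0p
      by (simp add: field_simps)
  qed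
  then show ?thesis using low t0U by (auto simp: U_def)
qed

theorem theorem7:
  fixes lam r0 \<alpha> W N0 :: real and d N :: nat
  assumes "lam > 0" and "r0 > 0" and "d \<ge> 1" and "\<alpha> > real d"
    and "W > 0" and "N0 > 0" and "N \<ge> 2"
  shows "(minimizers (normalized (fhma_delay_noise \<alpha> r0 W N0 N))
           = {exp (lambertW (real N / (r0 powr \<alpha> * W * N0))) - 1})
    \<and> (let \<delta> = real d / \<alpha>;
             b0 = lam * unit_ball_vol (real d) * r0 powr (real d) * \<delta> * Cdelta \<delta>
                  * (real N - 1) powr (\<delta> - 1) * real N powr (- \<delta>)
         in \<exists>\<theta>opt. minimizers (normalized (fhma_delay lam d \<alpha> r0 W 0 N)) = {\<theta>opt}
              \<and> b0 powr (- 1 / (\<delta> + 1)) - 1 < \<theta>opt \<and> \<theta>opt < b0 powr (- 1 / \<delta>))"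
  using part1[OF assms(2,5,6,7)] part2[OF assms(1,2,3,4,7), of W]
  by (simp add: Let_def)

end
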